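(* Let $d,\alpha,\gamma>0$, $T>0$, $l_0>0$, let $\rho:\mathbb{R}\to(0,\infty)$ be continuously differentiable and $T$-periodic with $\rho(0)=1$, and let $g$ satisfy (A1), (B1), (B2) as in the context. Let $$R_0=\frac{\alpha}{\frac{d\lambda_1}{T}\int_0^T\frac{1}{\rho^2(t)}\,dt-\frac{1}{T}\ln g'(0)},$$ where $\lambda_1=(\pi/l_0)^2$ is the principal Dirichlet eigenvalue of $-\frac{d^2}{dy^2}$ on $(0,l_0)$. If $R_0<1$, then the solution $v(t,y)$ of $$\begin{cases}v_t=\frac{d}{\rho^2(t)}v_{yy}+\left(\alpha-\frac{\dot\rho(t)}{\rho(t)}\right)v-\gamma v^2, & y\in(0,l_0),\ t\in((nT)^+,(n+1)T],\ n=0,1,2,\dots,\\ v(t,0)=v(t,l_0)=0, & t>0,\\ v(0,y)=v_0(y)\ge0,\ v_0\not\equiv0, & y\in(0,l_0),\\ v((nT)^+,y)=g(v(nT,y)), & y\in(0,l_0),\ n=0,1,2,\dots\end{cases}$$ satisfies $\lim_{t\to\infty}v(t,y)=0$ uniformly for $y\in[0,l_0]$.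
   Context: (A1): $g$ is continuously differentiable on $[0,\infty)$, $g(0)=0$, $g'(0)>0$, and for $u>0$: $g(u)>0$, $g(u)/u$ is nonincreasing, $0<g(u)/u<1$. (B1): $g$ is nondecreasing on $[0,\infty)$. (B2): there are positive constants $D$, $\sigma$ and $\nu>1$ such that $g(u)\ge g'(0)u-Du^\nu$ for $0\le u\le\sigma$. $(nT)^+$ denotes the right limit at time $nT$. *)

theory Defs
  imports "HOL-Analysis.Analysis"
begin

text \<open>Classical solution of the reaction-diffusion equation
  w_t = d/rho(t)^2 w_yy + (alpha - rho'(t)/rho(t)) w - gamma w^2
  on the time slab (a,b] x (0,l0), with homogeneous Dirichlet data for t in (a,b],
  initial datum w(a,y) = u0(y) for y in (0,l0); w is continuous and bounded on
  ([a,b] x (0,l0)) union ((a,b] x [0,l0]) (continuity at the two bottom corners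
  is not required, allowing incompatible data).  Derivatives at t = b are one-sided.\<close>

definition piece_solution ::
  "real \<Rightarrow> real \<Rightarrow> real \<Rightarrow> (real \<Rightarrow> real) \<Rightarrow> (real \<Rightarrow> real) \<Rightarrow>
   real \<Rightarrow> real \<Rightarrow> real \<Rightarrow> (real \<Rightarrow> real) \<Rightarrow> (real \<Rightarrow> real \<Rightarrow> real) \<Rightarrow> bool" where
  "piece_solution d \<alpha> \<gamma> \<rho> \<rho>' a b l0 u0 w \<longleftrightarrow>
     continuous_on (({a..b} \<times> {0<..<l0}) \<union> ({a<..b} \<times> {0..l0})) (\<lambda>p. w (fst p) (snd p)) \<and>
     bounded ((\<lambda>p. w (fst p) (snd p)) ` (({a..b} \<times> {0<..<l0}) \<union> ({a<..b} \<times> {0..l0}))) \<and>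
     (\<forall>y\<in>{0<..<l0}. w a y = u0 y) \<and>
     (\<forall>t\<in>{a<..b}. w t 0 = 0 \<and> w t l0 = 0) \<and>
     (\<forall>t\<in>{a<..b}. \<forall>y\<in>{0<..<l0}. \<exists>wt wy wyy.
        ((\<lambda>s. w s y) has_real_derivative wt) (at t within {a..b}) \<and>
        (\<forall>z\<in>{0<..<l0}. ((\<lambda>x. w t x) has_real_derivative wy z) (at z)) \<and>
        (wy has_real_derivative wyy) (at y) \<and>
        wt = d / (\<rho> t)\<^sup>2 * wyy + (\<alpha> - \<rho>' t / \<rho> t) * w t y - \<gamma> * (w t y)\<^sup>2)"

definition impulsive_solution ::
  "real \<Rightarrow> real \<Rightarrow> real \<Rightarrow> (real \<Rightarrow> real) \<Rightarrow> (real \<Rightarrow> real) \<Rightarrow> (real \<Rightarrow> real) \<Rightarrow>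
   real \<Rightarrow> real \<Rightarrow> (real \<Rightarrow> real) \<Rightarrow> (real \<Rightarrow> real \<Rightarrow> real) \<Rightarrow> bool" where
  "impulsive_solution d \<alpha> \<gamma> \<rho> \<rho>' g T l0 v0 v \<longleftrightarrow>
     (\<forall>y\<in>{0..l0}. v 0 y = v0 y) \<and>
     (\<forall>n::nat. \<exists>w. piece_solution d \<alpha> \<gamma> \<rho> \<rho>' (real n * T) (real (Suc n) * T) l0
                        (\<lambda>y. g (v (real n * T) y)) w \<and>
                   (\<forall>t\<in>{real n * T<..real (Suc n) * T}. \<forall>y\<in>{0..l0}. v t y = w t y))"

end

theory Submission
  imports Defs
begin


lemma deriv_max_left:
  fixes f :: "real \<Rightarrow> real"
  assumes der: "(f has_real_derivative D) (at t within {a..b})" and "a < t" "t \<le> b"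
    and mx: "\<forall>s\<in>{a..b}. f s \<le> f t"
  shows "D \<ge> 0"
proof (rule ccontr)
  assume "\<not> D \<ge> 0"
  then have "D < 0" by simp
  from has_real_derivative_neg_dec_left[OF der this] obtain d where d: "d > 0"
    "\<forall>h>0. t - h \<in> {a..b} \<longrightarrow> h < d \<longrightarrow> f t < f (t - h)" by blast
  define h where "h = min (d/2) (t - a)"
  have "h > 0" "h < d" "t - h \<in> {a..b}" using d assms unfolding h_def by auto
  with d have "f t < f (t - h)" by blast
  with mx \<open>t - h \<in> {a..b}\<close> show False by force
qed

lemma deriv_max_interior2:
  fixes g g' :: "real \<Rightarrow> real"
  assumes "0 < y" "y < l"
    and d1: "\<forall>z\<in>{0<..<l}. (g has_real_derivative g' z) (at z)"
    and d2: "(g' has_real_derivative g2) (at y)"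
    and mx: "\<forall>z\<in>{0<..<l}. g z \<le> g y"
  shows "g2 \<le> 0"
proof (rule ccontr)
  assume "\<not> g2 \<le> 0"
  then have g2: "g2 > 0" by simp
  have dd: "(g has_real_derivative g' y) (at y)" using d1 assms by auto
  have le: "\<forall>ya. \<bar>y - ya\<bar> < min y (l - y) \<longrightarrow> g ya \<le> g y"
      using mx by (auto simp: abs_if split: if_splits)
  have "g' y = 0"
    using DERIV_local_max[OF dd _ le] assms by auto
  from has_real_derivative_pos_inc_right[OF d2 g2] obtain d where d: "d > 0"
    "\<forall>h>0. y + h \<in> UNIV \<longrightarrow> h < d \<longrightarrow> g' y < g' (y + h)" by blast
  define h where "h = min (d/2) ((l - y)/2)"
  have h1: "h \<le> (l - y)/2" "h \<le> d/2" unfolding h_def by (rule min.cobounded2, rule min.cobounded1)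
  have h0: "h > 0" unfolding h_def using d assms by simp
  have h: "h > 0" "h < d" "y + h < l"
    using d(1) h1 h0 apply linarith using d(1) h1 h0 apply linarith
    using h1(1) \<open>y < l\<close> by (simp add: field_simps)
  have "\<exists>z. y < z \<and> z < y + h \<and> g (y + h) - g y = (y + h - y) * g' z"
    by (rule MVT2) (use h assms d1 in auto)
  then obtain z where z: "y < z" "z < y + h" "g (y + h) - g y = h * g' z" by auto
  have "g' z > 0" using d(2)[rule_format, of "z - y"] z h \<open>g' y = 0\<close> by auto
  then have "h * g' z > 0" using h(1) by simp
  then have "g (y + h) > g y" using z(3) by linarith
  moreover have "g (y + h) \<le> g y" using mx h assms by auto
  ultimately show False by simp
qed

definition slab :: "real \<Rightarrow> real \<Rightarrow> real \<Rightarrow> (real \<times> real) set" where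
  "slab a b l = ({a..b} \<times> {0<..<l}) \<union> ({a<..b} \<times> {0..l})"

definition derivs_at where
  "derivs_at u a b l t y P \<longleftrightarrow> (\<exists>ut uy uyy. ((\<lambda>s. u s y) has_real_derivative ut) (at t within {a..b}) \<and>
        (\<forall>z\<in>{0<..<l}. ((\<lambda>x. u t x) has_real_derivative uy z) (at z)) \<and>
        (uy has_real_derivative uyy) (at y) \<and> P ut uyy)"

lemma mp_barrier:
  fixes u h :: "real \<Rightarrow> real \<Rightarrow> real" and k :: "real \<Rightarrow> real"
  assumes "a < b" "0 < l" "r1 > 0" "r2 > 0"
  and kpos: "\<forall>t\<in>{a<..b}. k t > 0"
  and ucont: "continuous_on (slab a b l) (\<lambda>p. u (fst p) (snd p))"
  and hcont: "continuous_on (slab a b l) (\<lambda>p. h (fst p) (snd p))"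
  and hnn: "\<forall>p\<in>slab a b l. h (fst p) (snd p) \<ge> 0"
  and uinit: "\<forall>y\<in>{0<..<l}. u a y \<le> 0"
  and ubd: "\<forall>t\<in>{a<..b}. u t 0 \<le> 0 \<and> u t l \<le> 0"
  and hbig: "\<forall>p\<in>slab a b l. fst p < a + r1 \<and> (snd p < r2 \<or> snd p > l - r2) \<longrightarrow> u (fst p) (snd p) \<le> h (fst p) (snd p)"
  and uder: "\<forall>t\<in>{a<..b}. \<forall>y\<in>{0<..<l}. u t y > 0 \<longrightarrow> derivs_at u a b l t y (\<lambda>ut uyy. ut < k t * uyy)"
  and hder: "\<forall>t\<in>{a<..b}. \<forall>y\<in>{0<..<l}. derivs_at h a b l t y (\<lambda>ht hyy. ht \<ge> k t * hyy)"
  shows "\<forall>p\<in>slab a b l. u (fst p) (snd p) \<le> h (fst p) (snd p)"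
proof (rule ccontr)
  assume "\<not> ?thesis"
  then obtain p0 where p0: "p0 \<in> slab a b l" "u (fst p0) (snd p0) > h (fst p0) (snd p0)" by force
  define \<psi> where "\<psi> = (\<lambda>p. u (fst p) (snd p) - h (fst p) (snd p))"
  define S where "S = ({a..b} \<times> {0..l}) \<inter> {p. a + r1 \<le> fst p \<or> (r2 \<le> snd p \<and> snd p \<le> l - r2)}"
  have cS: "compact S" unfolding S_def
  proof (rule compact_Int_closed)
    show "compact ({a..b} \<times> {0..l})" by (intro compact_Times compact_Icc)
    have "closed ({p. a + r1 \<le> fst p} \<union> ({p. r2 \<le> snd p} \<inter> {p. snd p \<le> l - r2}))"
      by (intro closed_Un closed_Int closed_Collect_le continuous_intros)
    moreover have "{p. a + r1 \<le> fst p \<or> (r2 \<le> snd p \<and> snd p \<le> l - r2)} =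
       {p. a + r1 \<le> fst p} \<union> ({p. r2 \<le> snd p} \<inter> {p. snd p \<le> l - r2})" by auto
    ultimately show "closed {p. a + r1 \<le> fst p \<or> (r2 \<le> snd p \<and> snd p \<le> l - r2)}" by simp
  qed
  have Ssub: "S \<subseteq> slab a b l"
    unfolding S_def slab_def using assms(3,4) by (auto simp: mem_Times_iff)
  have p0S: "p0 \<in> S"
  proof -
    have "\<not> (fst p0 < a + r1 \<and> (snd p0 < r2 \<or> snd p0 > l - r2))"
      using hbig p0 by force
    then show ?thesis using p0(1) unfolding S_def slab_def by (auto simp: mem_Times_iff)
  qed
  have cpsi: "continuous_on S \<psi>" unfolding \<psi>_def
    by (intro continuous_intros continuous_on_subset[OF ucont Ssub] continuous_on_subset[OF hcont Ssub])
  obtain p where pS: "p \<in> S" and pmax: "\<forall>q\<in>S. \<psi> q \<le> \<psi> p"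
    using continuous_attains_sup[OF cS _ cpsi] p0S by blast
  have ppos: "\<psi> p > 0" using pmax p0S p0(2) unfolding \<psi>_def by force
  have pmax2: "\<forall>q\<in>slab a b l. \<psi> q \<le> \<psi> p"
  proof
    fix q assume q: "q \<in> slab a b l"
    show "\<psi> q \<le> \<psi> p"
    proof (cases "q \<in> S")
      case True then show ?thesis using pmax by blast
    next
      case False
      then have "fst q < a + r1 \<and> (snd q < r2 \<or> snd q > l - r2)"
        using q unfolding S_def slab_def by (auto simp: mem_Times_iff)
      then have "\<psi> q \<le> 0" using hbig q unfolding \<psi>_def by force
      then show ?thesis using ppos by simp
    qed
  qed
  obtain t y where p: "p = (t, y)" by (cases p)
  have pslab: "(t, y) \<in> slab a b l" using pS Ssub p by blast
  have ta: "t \<noteq> a"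
  proof
    assume "t = a"
    then have "y \<in> {0<..<l}" using pslab unfolding slab_def by auto
    then have "u t y \<le> 0" using uinit \<open>t = a\<close> by auto
    moreover have "h t y \<ge> 0" using hnn pslab by force
    ultimately show False using ppos p unfolding \<psi>_def by simp
  qed
  then have t: "t \<in> {a<..b}" using pslab unfolding slab_def by auto
  have y: "y \<in> {0<..<l}"
  proof -
    have "y \<in> {0..l}" using pslab unfolding slab_def by auto
    moreover have "y \<noteq> 0" "y \<noteq> l"
    proof -
      have "(t, 0) \<in> slab a b l" "(t, l) \<in> slab a b l" using t assms(2) unfolding slab_def by auto
      then have "h t 0 \<ge> 0" "h t l \<ge> 0" using hnn by force+
      then show "y \<noteq> 0" "y \<noteq> l" using ubd t ppos p unfolding \<psi>_def by force+
    qed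
    ultimately show ?thesis by auto
  qed
  have upos: "u t y > 0"
  proof -
    have "h t y \<ge> 0" using hnn pslab by force
    then show ?thesis using ppos p unfolding \<psi>_def by simp
  qed
  obtain ut uy uyy where U: "((\<lambda>s. u s y) has_real_derivative ut) (at t within {a..b})"
        "\<forall>z\<in>{0<..<l}. ((\<lambda>x. u t x) has_real_derivative uy z) (at z)"
        "(uy has_real_derivative uyy) (at y)" "ut < k t * uyy"
    using uder t y upos unfolding derivs_at_def by blast
  obtain ht hy hyy where H: "((\<lambda>s. h s y) has_real_derivative ht) (at t within {a..b})"
        "\<forall>z\<in>{0<..<l}. ((\<lambda>x. h t x) has_real_derivative hy z) (at z)"
        "(hy has_real_derivative hyy) (at y)" "ht \<ge> k t * hyy"
    using hder t y unfolding derivs_at_def by blast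
  have "ut - ht \<ge> 0"
  proof (rule deriv_max_left[of "\<lambda>s. u s y - h s y" _ t a b])
    show "((\<lambda>s. u s y - h s y) has_real_derivative ut - ht) (at t within {a..b})"
      by (intro derivative_intros U(1) H(1))
    show "a < t" "t \<le> b" using t by auto
    show "\<forall>s\<in>{a..b}. u s y - h s y \<le> u t y - h t y"
    proof
      fix s assume "s \<in> {a..b}"
      then have "(s, y) \<in> slab a b l" using y unfolding slab_def by auto
      then show "u s y - h s y \<le> u t y - h t y" using pmax2 p unfolding \<psi>_def by force
    qed
  qed
  moreover have "uyy - hyy \<le> 0"
  proof (rule deriv_max_interior2[of y l "\<lambda>x. u t x - h t x" "\<lambda>z. uy z - hy z"])
    show "0 < y" "y < l" using y by auto
    show "\<forall>z\<in>{0<..<l}. ((\<lambda>x. u t x - h t x) has_real_derivative uy z - hy z) (at z)"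
      using U(2) H(2) by (auto intro: derivative_intros)
    show "((\<lambda>z. uy z - hy z) has_real_derivative uyy - hyy) (at y)"
      by (intro derivative_intros U(3) H(3))
    show "\<forall>z\<in>{0<..<l}. u t z - h t z \<le> u t y - h t y"
    proof
      fix z assume "z \<in> {0<..<l}"
      then have "(t, z) \<in> slab a b l" using t unfolding slab_def by auto
      then show "u t z - h t z \<le> u t y - h t y" using pmax2 p unfolding \<psi>_def by force
    qed
  qed
  moreover have "k t > 0" using kpos t by auto
  ultimately have "k t * uyy \<le> k t * hyy" by (simp add: mult_left_mono)
  then show False using U(4) H(4) \<open>ut - ht \<ge> 0\<close> by linarith
qed



definition heatG :: "real \<Rightarrow> real \<Rightarrow> real" where
  "heatG \<sigma> y = exp (-(y\<^sup>2) / (4 * \<sigma>)) / sqrt \<sigma>"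
definition heatGy :: "real \<Rightarrow> real \<Rightarrow> real" where
  "heatGy \<sigma> y = -(y / (2 * \<sigma>)) * heatG \<sigma> y"
definition heatGyy :: "real \<Rightarrow> real \<Rightarrow> real" where
  "heatGyy \<sigma> y = (y\<^sup>2 / (4 * \<sigma>\<^sup>2) - 1 / (2 * \<sigma>)) * heatG \<sigma> y"

lemma G_dy: "\<sigma> > 0 \<Longrightarrow> ((\<lambda>y. heatG \<sigma> y) has_real_derivative heatGy \<sigma> y) (at y)"
  unfolding heatG_def heatGy_def
  apply (rule derivative_eq_intros refl | simp)+
  apply (simp add: field_simps power2_eq_square)
  done

lemma Gy_dy: "\<sigma> > 0 \<Longrightarrow> ((\<lambda>y. heatGy \<sigma> y) has_real_derivative heatGyy \<sigma> y) (at y)"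
  unfolding heatGy_def heatGyy_def
  apply (rule derivative_eq_intros refl G_dy | simp)+
  apply (simp add: heatGy_def field_simps power2_eq_square)
  done

lemma G_ds: "\<sigma> > 0 \<Longrightarrow> ((\<lambda>\<sigma>. heatG \<sigma> y) has_real_derivative heatGyy \<sigma> y) (at \<sigma>)"
  unfolding heatG_def heatGyy_def
  apply (rule derivative_eq_intros refl | simp)+
  apply (simp add: field_simps power2_eq_square)
  done

lemma G_nonneg: "\<sigma> \<ge> 0 \<Longrightarrow> heatG \<sigma> y \<ge> 0" unfolding heatG_def by (simp add: divide_nonneg_nonneg)

lemma G_upper: "\<sigma> > 0 \<Longrightarrow> heatG \<sigma> y \<le> 1 / sqrt \<sigma>"
  unfolding heatG_def by (simp add: divide_right_mono)

lemma G_lower: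
  assumes "s > 0" "s \<le> \<sigma>" "\<sigma> \<le> 2 * s" "y\<^sup>2 \<le> s"
  shows "heatG \<sigma> y \<ge> 3 / (8 * sqrt s)"
proof -
  have "exp (-(y\<^sup>2) / (4 * \<sigma>)) \<ge> 1 + (-(y\<^sup>2) / (4 * \<sigma>))" by (rule exp_ge_add_one_self)
  moreover have "y\<^sup>2 / (4 * \<sigma>) \<le> 1/4" using assms by (simp add: field_simps)
  ultimately have e: "exp (-(y\<^sup>2) / (4 * \<sigma>)) \<ge> 3/4" by simp
  have "sqrt \<sigma> \<le> sqrt (2 * s)" using assms by simp
  also have "\<dots> = sqrt 2 * sqrt s" by (simp add: real_sqrt_mult)
  also have "\<dots> \<le> 2 * sqrt s" using sqrt2_less_2 assms by simp
  finally have sq: "sqrt \<sigma> \<le> 2 * sqrt s" .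
  have sp: "sqrt \<sigma> > 0" "sqrt s > 0" using assms by auto
  have "3 / (8 * sqrt s) = (3/4) / (2 * sqrt s)" by simp
  also have "\<dots> \<le> (3/4) / sqrt \<sigma>" using sq sp by (intro divide_left_mono) auto
  also have "\<dots> \<le> exp (-(y\<^sup>2) / (4 * \<sigma>)) / sqrt \<sigma>" using e sp by (intro divide_right_mono) auto
  finally show ?thesis unfolding heatG_def .
qed

lemma barrier_exists:
  fixes k :: "real \<Rightarrow> real"
  assumes ab: "a < b" "0 < l" and kc: "continuous_on {a..b} k" and kp: "\<forall>t\<in>{a..b}. k t > 0"
    and B: "B \<ge> 0" and t0: "a < t0" "t0 \<le> b" and eta: "\<eta> > 0"
  shows "\<exists>h r1 r2. r1 > 0 \<and> r2 > 0 \<and> continuous_on (slab a b l) (\<lambda>p. h (fst p) (snd p)) \<and>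
     (\<forall>p\<in>slab a b l. h (fst p) (snd p) \<ge> 0) \<and>
     (\<forall>p\<in>slab a b l. fst p < a + r1 \<and> (snd p < r2 \<or> snd p > l - r2) \<longrightarrow> B \<le> h (fst p) (snd p)) \<and>
     (\<forall>y. h t0 y \<le> \<eta>) \<and>
     (\<forall>t\<in>{a<..b}. \<forall>y\<in>{0<..<l}. derivs_at h a b l t y (\<lambda>ht hyy. ht \<ge> k t * hyy))"
proof -
  define \<theta> where "\<theta> = (\<lambda>t. integral {a..t} k)"
  have kint: "k integrable_on {a..b}" using kc by (rule integrable_continuous_interval)
  have thc: "continuous_on {a..b} \<theta>" unfolding \<theta>_def by (rule indefinite_integral_continuous_1[OF kint])
  have thd: "\<And>t. t \<in> {a..b} \<Longrightarrow> (\<theta> has_real_derivative k t) (at t within {a..b})"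
    unfolding \<theta>_def by (rule integral_has_real_derivative[OF kc])
  have thnn: "\<And>t. t \<in> {a..b} \<Longrightarrow> \<theta> t \<ge> 0"
  proof -
    fix t assume t: "t \<in> {a..b}"
    have "k integrable_on {a..t}" using kc t by (intro integrable_continuous_interval continuous_on_subset[OF kc]) auto
    then show "\<theta> t \<ge> 0" unfolding \<theta>_def
    proof (rule Henstock_Kurzweil_Integration.integral_nonneg)
      fix x assume "x \<in> {a..t}"
      then have "x \<in> {a..b}" using t by auto
      then show "0 \<le> k x" using kp by (simp add: less_imp_le)
    qed
  qed
  have tha: "\<theta> a = 0" unfolding \<theta>_def by simp
  have th0: "\<theta> t0 > 0"
  proof -
    have cs: "continuous_on {a..t0} k" using t0 by (intro continuous_on_subset[OF kc]) auto
    obtain x where x: "x \<in> {a..t0}" "\<forall>y\<in>{a..t0}. k x \<le> k y"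
      using continuous_attains_inf[OF compact_Icc _ cs] t0 by auto
    have kx: "k x > 0" using kp x t0 by auto
    have "integral {a..t0} (\<lambda>_. k x) \<le> integral {a..t0} k"
      by (rule integral_le) (use cs x in \<open>auto intro: integrable_continuous_interval\<close>)
    moreover have "integral {a..t0} (\<lambda>_. k x) = (t0 - a) * k x" using t0 by simp
    moreover have "(t0 - a) * k x > 0" using kx t0 by simp
    ultimately show ?thesis unfolding \<theta>_def by linarith
  qed
  define r2 where "r2 = \<eta> * sqrt (\<theta> t0) / (8 * (B + 1))"
  have r2: "r2 > 0" unfolding r2_def using eta th0 B by simp
  define s where "s = r2\<^sup>2"
  have s: "s > 0" "sqrt s = r2" unfolding s_def using r2 by auto
  obtain r1 where r1: "r1 > 0" "\<forall>t\<in>{a..b}. dist t a < r1 \<longrightarrow> dist (\<theta> t) (\<theta> a) < s"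
    using thc ab s unfolding continuous_on_iff by (metis atLeastAtMost_iff order.strict_implies_order order_refl)
  define A where "A = 4 * B * r2"
  have A: "A \<ge> 0" unfolding A_def using B r2 by simp
  define h where "h = (\<lambda>t y. A * (heatG (\<theta> t + s) y + heatG (\<theta> t + s) (l - y)))"
  have sig: "\<And>t. t \<in> {a..b} \<Longrightarrow> \<theta> t + s > 0" using thnn s by (simp add: add_nonneg_pos)
  have slabsub: "slab a b l \<subseteq> {a..b} \<times> UNIV" unfolding slab_def by auto
  have thc2: "continuous_on (slab a b l) (\<lambda>p. \<theta> (fst p))"
    by (rule continuous_on_compose2[OF thc continuous_on_fst]) (use slabsub in auto)
  have sig2: "\<And>p. p \<in> slab a b l \<Longrightarrow> \<theta> (fst p) + s > 0" using sig slabsub by auto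
  have hc: "continuous_on (slab a b l) (\<lambda>p. h (fst p) (snd p))"
    unfolding h_def heatG_def
    using sig2 by (intro continuous_intros thc2) (auto dest: sig2)
  have hnn: "\<forall>p\<in>slab a b l. h (fst p) (snd p) \<ge> 0"
    unfolding h_def using A G_nonneg sig2 by (simp add: less_imp_le)
  have hbig: "\<forall>p\<in>slab a b l. fst p < a + r1 \<and> (snd p < r2 \<or> snd p > l - r2) \<longrightarrow> B \<le> h (fst p) (snd p)"
  proof (intro ballI impI)
    fix p assume p: "p \<in> slab a b l" and c: "fst p < a + r1 \<and> (snd p < r2 \<or> snd p > l - r2)"
    define t where "t = fst p"
    define y where "y = snd p"
    have t: "t \<in> {a..b}" "y \<in> {0..l}" using p unfolding slab_def t_def y_def by auto
    have "t - a < r1" using c unfolding t_def by simp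
    then have "\<bar>\<theta> t\<bar> < s" using r1(2) t(1) tha by (auto simp: dist_real_def)
    then have "\<theta> t < s" by simp
    then have \<sigma>: "s \<le> \<theta> t + s" "\<theta> t + s \<le> 2 * s" using thnn t by auto
    have key: "\<And>z. 0 \<le> z \<Longrightarrow> z < r2 \<Longrightarrow> B \<le> A * heatG (\<theta> t + s) z"
    proof -
      fix z assume z: "0 \<le> z" "z < r2"
      have "z\<^sup>2 \<le> s" unfolding s_def using z by (simp add: power_mono)
      then have "heatG (\<theta> t + s) z \<ge> 3 / (8 * sqrt s)" using G_lower[OF s(1) \<sigma>] by simp
      then have "A * heatG (\<theta> t + s) z \<ge> A * (3 / (8 * r2))" using A s by (metis mult_left_mono)
      moreover have "A * (3 / (8 * r2)) = 3 * B / 2" unfolding A_def using r2 by simp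
      ultimately show "B \<le> A * heatG (\<theta> t + s) z" using B by linarith
    qed
    have g1: "A * heatG (\<theta> t + s) y \<ge> 0" "A * heatG (\<theta> t + s) (l - y) \<ge> 0" using A G_nonneg \<sigma> s by auto
    show "B \<le> h (fst p) (snd p)"
    proof (cases "y < r2")
      case True
      then have "B \<le> A * heatG (\<theta> t + s) y" using key t by auto
      then show ?thesis unfolding h_def t_def[symmetric] y_def[symmetric] using g1 by (simp add: distrib_left)
    next
      case False
      then have "l - y < r2" using c unfolding y_def by auto
      then have "B \<le> A * heatG (\<theta> t + s) (l - y)" using key t by auto
      then show ?thesis unfolding h_def t_def[symmetric] y_def[symmetric] using g1 by (simp add: distrib_left)
    qed
  qed
  have ht0: "\<forall>y. h t0 y \<le> \<eta>"
  proof
    fix y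
    have \<sigma>0: "\<theta> t0 + s > 0" "\<theta> t0 \<le> \<theta> t0 + s" using th0 s by auto
    have "heatG (\<theta> t0 + s) y \<le> 1 / sqrt (\<theta> t0)" "heatG (\<theta> t0 + s) (l - y) \<le> 1 / sqrt (\<theta> t0)"
      using G_upper[OF \<sigma>0(1)] \<sigma>0 th0 by (smt (verit) divide_left_mono real_sqrt_gt_zero real_sqrt_le_mono mult_pos_pos)+
    then have "heatG (\<theta> t0 + s) y + heatG (\<theta> t0 + s) (l - y) \<le> 2 / sqrt (\<theta> t0)" by simp
    then have "h t0 y \<le> A * (2 / sqrt (\<theta> t0))" unfolding h_def using A by (metis mult_left_mono)
    also have "\<dots> = 8 * B * \<eta> / (8 * (B + 1))" unfolding A_def r2_def using th0 by simp
    also have "\<dots> \<le> \<eta>" using B eta by (simp add: field_simps)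
    finally show "h t0 y \<le> \<eta>" .
  qed
  have hder: "\<forall>t\<in>{a<..b}. \<forall>y\<in>{0<..<l}. derivs_at h a b l t y (\<lambda>ht hyy. ht \<ge> k t * hyy)"
  proof (intro ballI)
    fix t y assume t: "t \<in> {a<..b}" and y: "y \<in> {0<..<l}"
    have tt: "t \<in> {a..b}" using t by auto
    define \<sigma> where "\<sigma> = \<theta> t + s"
    have sp: "\<sigma> > 0" unfolding \<sigma>_def using sig tt by auto
    have td: "((\<lambda>t'. \<theta> t' + s) has_real_derivative k t) (at t within {a..b})"
      using thd[OF tt] by (auto intro!: derivative_eq_intros)
    have d1: "((\<lambda>t'. heatG (\<theta> t' + s) y) has_real_derivative heatGyy \<sigma> y * k t) (at t within {a..b})"
      using DERIV_chain2[OF G_ds[OF sp[unfolded \<sigma>_def], of y] td] unfolding \<sigma>_def by simp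
    have d2: "((\<lambda>t'. heatG (\<theta> t' + s) (l - y)) has_real_derivative heatGyy \<sigma> (l - y) * k t) (at t within {a..b})"
      using DERIV_chain2[OF G_ds[OF sp[unfolded \<sigma>_def], of "l - y"] td] unfolding \<sigma>_def by simp
    have dt: "((\<lambda>t'. h t' y) has_real_derivative A * (heatGyy \<sigma> y * k t + heatGyy \<sigma> (l - y) * k t)) (at t within {a..b})"
      unfolding h_def by (intro DERIV_cmult DERIV_add d1 d2)
    have dy: "\<forall>z\<in>{0<..<l}. ((\<lambda>x. h t x) has_real_derivative A * (heatGy \<sigma> z - heatGy \<sigma> (l - z))) (at z)"
    proof
      fix z
      have e1: "((\<lambda>x. heatG \<sigma> (l - x)) has_real_derivative heatGy \<sigma> (l - z) * (0 - 1)) (at z)"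
        by (rule DERIV_chain2[of "\<lambda>x. heatG \<sigma> x"], rule G_dy[OF sp], intro derivative_intros)
      show "((\<lambda>x. h t x) has_real_derivative A * (heatGy \<sigma> z - heatGy \<sigma> (l - z))) (at z)"
        unfolding h_def \<sigma>_def[symmetric] using e1 G_dy[OF sp, of z]
        by (auto intro!: derivative_eq_intros)
    qed
    have dyy: "((\<lambda>z. A * (heatGy \<sigma> z - heatGy \<sigma> (l - z))) has_real_derivative A * (heatGyy \<sigma> y + heatGyy \<sigma> (l - y))) (at y)"
    proof -
      have e1: "((\<lambda>x. heatGy \<sigma> (l - x)) has_real_derivative heatGyy \<sigma> (l - y) * (0 - 1)) (at y)"
        by (rule DERIV_chain2[of "\<lambda>x. heatGy \<sigma> x"], rule Gy_dy[OF sp], intro derivative_intros)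
      show ?thesis using e1 Gy_dy[OF sp, of y] by (auto intro!: derivative_eq_intros)
    qed
    show "derivs_at h a b l t y (\<lambda>ht hyy. ht \<ge> k t * hyy)"
      unfolding derivs_at_def
      by (rule exI[of _ "A * (heatGyy \<sigma> y * k t + heatGyy \<sigma> (l - y) * k t)"],
          rule exI[of _ "\<lambda>z. A * (heatGy \<sigma> z - heatGy \<sigma> (l - z))"],
          rule exI[of _ "A * (heatGyy \<sigma> y + heatGyy \<sigma> (l - y))"])
         (use dt dy dyy in \<open>simp add: algebra_simps\<close>)
  qed
  show ?thesis using r1(1) r2 hc hnn hbig ht0 hder by blast
qed



lemma mp_weak:
  fixes z :: "real \<Rightarrow> real \<Rightarrow> real" and k :: "real \<Rightarrow> real"
  assumes ab: "a < b" "0 < l" and kc: "continuous_on {a..b} k" and kp: "\<forall>t\<in>{a..b}. k t > 0"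
    and C: "C \<ge> 0"
    and zcont: "continuous_on (slab a b l) (\<lambda>p. z (fst p) (snd p))"
    and zbd: "\<forall>p\<in>slab a b l. z (fst p) (snd p) \<le> B"
    and zinit: "\<forall>y\<in>{0<..<l}. z a y \<le> 0"
    and zb: "\<forall>t\<in>{a<..b}. z t 0 \<le> 0 \<and> z t l \<le> 0"
    and zder: "\<forall>t\<in>{a<..b}. \<forall>y\<in>{0<..<l}. z t y > 0 \<longrightarrow>
                 derivs_at z a b l t y (\<lambda>zt zyy. zt \<le> k t * zyy + C * z t y)"
  shows "\<forall>p\<in>slab a b l. z (fst p) (snd p) \<le> 0"
proof (rule ccontr)
  assume "\<not> ?thesis"
  then obtain t0 y0 where p0: "(t0, y0) \<in> slab a b l" "z t0 y0 > 0" by force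
  have "t0 \<noteq> a"
  proof
    assume "t0 = a"
    then have "y0 \<in> {0<..<l}" using p0 unfolding slab_def by auto
    then show False using zinit p0 \<open>t0 = a\<close> by force
  qed
  then have t0: "a < t0" "t0 \<le> b" using p0 unfolding slab_def by auto
  define E where "E = (\<lambda>t. exp (-(C + 1) * (t - a)))"
  define u where "u = (\<lambda>t y. E t * z t y)"
  have Epos: "\<And>t. E t > 0" unfolding E_def by simp
  have Ele1: "\<And>t. t \<ge> a \<Longrightarrow> E t \<le> 1"
  proof -
    fix t :: real assume "t \<ge> a"
    then have "(-(C + 1)) * (t - a) \<le> 0" using C by (simp add: mult_nonpos_nonneg)
    then show "E t \<le> 1" unfolding E_def by simp
  qed
  have usgn1: "\<And>t y. u t y > 0 \<longleftrightarrow> z t y > 0"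
  proof -
    fix t y show "u t y > 0 \<longleftrightarrow> z t y > 0" unfolding u_def using Epos[of t] by (simp add: zero_less_mult_iff)
  qed
  have usgn: "\<And>t y. u t y > 0 \<longleftrightarrow> z t y > 0" "\<And>t y. u t y \<le> 0 \<longleftrightarrow> z t y \<le> 0"
    using usgn1 by (auto simp: not_less[symmetric])
  define B' where "B' = max B 0"
  have ubd: "\<forall>p\<in>slab a b l. u (fst p) (snd p) \<le> B'"
  proof
    fix p assume p: "p \<in> slab a b l"
    have ta: "fst p \<ge> a" using p unfolding slab_def by auto
    show "u (fst p) (snd p) \<le> B'"
    proof (cases "z (fst p) (snd p) \<le> 0")
      case True then show ?thesis using usgn unfolding B'_def by (meson max.coboundedI2 order.trans)
    next
      case False
      then have "u (fst p) (snd p) \<le> z (fst p) (snd p)" unfolding u_def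
        using Ele1[OF ta] by (simp add: mult_left_le_one_le)
      then show ?thesis using zbd p unfolding B'_def by force
    qed
  qed
  define \<eta> where "\<eta> = u t0 y0 / 2"
  have eta: "\<eta> > 0" unfolding \<eta>_def using usgn p0 by simp
  obtain h r1 r2 where H: "r1 > 0" "r2 > 0" "continuous_on (slab a b l) (\<lambda>p. h (fst p) (snd p))"
     "\<forall>p\<in>slab a b l. h (fst p) (snd p) \<ge> 0"
     "\<forall>p\<in>slab a b l. fst p < a + r1 \<and> (snd p < r2 \<or> snd p > l - r2) \<longrightarrow> B' \<le> h (fst p) (snd p)"
     "\<forall>y. h t0 y \<le> \<eta>"
     "\<forall>t\<in>{a<..b}. \<forall>y\<in>{0<..<l}. derivs_at h a b l t y (\<lambda>ht hyy. ht \<ge> k t * hyy)"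
    using barrier_exists[OF ab kc kp _ t0 eta, of B'] unfolding B'_def by auto
  have "\<forall>p\<in>slab a b l. u (fst p) (snd p) \<le> h (fst p) (snd p)"
  proof (rule mp_barrier[OF ab H(1,2) _ _ H(3,4)])
    show "\<forall>t\<in>{a<..b}. k t > 0" using kp by auto
    show "continuous_on (slab a b l) (\<lambda>p. u (fst p) (snd p))"
      unfolding u_def E_def by (intro continuous_intros zcont)
    show "\<forall>y\<in>{0<..<l}. u a y \<le> 0" using zinit usgn by blast
    show "\<forall>t\<in>{a<..b}. u t 0 \<le> 0 \<and> u t l \<le> 0" using zb usgn by blast
    show "\<forall>p\<in>slab a b l. fst p < a + r1 \<and> (snd p < r2 \<or> snd p > l - r2) \<longrightarrow> u (fst p) (snd p) \<le> h (fst p) (snd p)"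
      using H(5) ubd by force
    show "\<forall>t\<in>{a<..b}. \<forall>y\<in>{0<..<l}. derivs_at h a b l t y (\<lambda>ht hyy. ht \<ge> k t * hyy)" by (rule H(7))
    show "\<forall>t\<in>{a<..b}. \<forall>y\<in>{0<..<l}. u t y > 0 \<longrightarrow> derivs_at u a b l t y (\<lambda>ut uyy. ut < k t * uyy)"
    proof (intro ballI impI)
      fix t y assume t: "t \<in> {a<..b}" and y: "y \<in> {0<..<l}" and up: "u t y > 0"
      then have zp: "z t y > 0" using usgn by simp
      obtain zt zy zyy where Z: "((\<lambda>s. z s y) has_real_derivative zt) (at t within {a..b})"
        "\<forall>w\<in>{0<..<l}. ((\<lambda>x. z t x) has_real_derivative zy w) (at w)"
        "(zy has_real_derivative zyy) (at y)" "zt \<le> k t * zyy + C * z t y"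
        using zder t y zp unfolding derivs_at_def by blast
      have dE: "(E has_real_derivative (-(C + 1)) * E t) (at t within {a..b})"
        unfolding E_def by (auto intro!: derivative_eq_intros)
      have d1: "((\<lambda>s. u s y) has_real_derivative (-(C + 1)) * E t * z t y + E t * zt) (at t within {a..b})"
        unfolding u_def using DERIV_mult[OF dE Z(1)] by (simp add: algebra_simps)
      have d2: "\<forall>w\<in>{0<..<l}. ((\<lambda>x. u t x) has_real_derivative E t * zy w) (at w)"
        unfolding u_def using Z(2) by (auto intro: DERIV_cmult)
      have d3: "((\<lambda>w. E t * zy w) has_real_derivative E t * zyy) (at y)"
        using Z(3) by (rule DERIV_cmult)
      have "(-(C + 1)) * E t * z t y + E t * zt \<le> (-(C + 1)) * E t * z t y + E t * (k t * zyy + C * z t y)"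
        using Z(4) Epos[of t] by (simp add: mult_left_mono)
      also have "\<dots> = k t * (E t * zyy) - E t * z t y" by (simp add: algebra_simps)
      also have "\<dots> < k t * (E t * zyy)" using Epos[of t] zp by simp
      finally have ineq: "(-(C + 1)) * E t * z t y + E t * zt < k t * (E t * zyy)" .
      show "derivs_at u a b l t y (\<lambda>ut uyy. ut < k t * uyy)"
        unfolding derivs_at_def
        by (rule exI[of _ "(-(C + 1)) * E t * z t y + E t * zt"], rule exI[of _ "\<lambda>w. E t * zy w"],
            rule exI[of _ "E t * zyy"]) (use d1 d2 d3 ineq in simp)
    qed
  qed
  then have "u t0 y0 \<le> h t0 y0" using p0 by force
  with H(6) have "u t0 y0 \<le> \<eta>" by (metis order.trans)
  then show False using eta unfolding \<eta>_def by simp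
qed



lemma slab_step:
  fixes d \<alpha> \<gamma> T l0 a \<mu> M :: real and \<rho> \<rho>' u0 :: "real \<Rightarrow> real" and w :: "real \<Rightarrow> real \<Rightarrow> real"
  assumes pos: "d > 0" "\<gamma> > 0" "T > 0" "l0 > 0"
    and rho_pos: "\<forall>t. \<rho> t > 0"
    and rho_deriv: "\<forall>t. (\<rho> has_real_derivative \<rho>' t) (at t)"
    and rho'_cont: "continuous_on UNIV \<rho>'"
    and rho_shift: "\<forall>t. \<rho> (t - a) = \<rho> t"
    and rho_a: "\<rho> a = 1"
    and mu: "\<mu> > 0" "\<mu> * l0 < pi"
    and M: "M \<ge> 0"
    and psol: "piece_solution d \<alpha> \<gamma> \<rho> \<rho>' a (a + T) l0 u0 w"
    and u0: "\<forall>y\<in>{0<..<l0}. 0 \<le> u0 y \<and> u0 y \<le> M * cos (\<mu> * (y - l0/2))"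
  shows "\<forall>p\<in>slab a (a+T) l0. 0 \<le> w (fst p) (snd p) \<and>
     w (fst p) (snd p) \<le> M * (exp (\<alpha> * (fst p - a) - d * \<mu>\<^sup>2 * integral {0..fst p - a} (\<lambda>t. 1 / (\<rho> t)\<^sup>2)) / \<rho> (fst p))
        * cos (\<mu> * (snd p - l0/2))"
proof -
  define b where "b = a + T"
  have ab: "a < b" "0 < l0" unfolding b_def using pos by auto
  define k where "k = (\<lambda>t. d / (\<rho> t)\<^sup>2)"
  define c where "c = (\<lambda>t. \<alpha> - \<rho>' t / \<rho> t)"
  define \<phi> where "\<phi> = (\<lambda>y. cos (\<mu> * (y - l0/2)))"
  define f0 where "f0 = (\<lambda>t. 1 / (\<rho> t)\<^sup>2)"
  define \<theta> where "\<theta> = (\<lambda>\<tau>. integral {0..\<tau>} f0)"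
  define Q where "Q = (\<lambda>t. exp (\<alpha> * (t - a) - d * \<mu>\<^sup>2 * \<theta> (t - a)) / \<rho> t)"
  define \<Psi> where "\<Psi> = (\<lambda>t y. M * Q t * \<phi> y)"
  have rc: "continuous_on UNIV \<rho>"
    using rho_deriv DERIV_isCont continuous_at_imp_continuous_on by blast
  have rne: "\<And>t. \<rho> t \<noteq> 0" using rho_pos by (metis less_irrefl)
  have kc: "continuous_on {a..b} k" unfolding k_def
    by (intro continuous_intros continuous_on_subset[OF rc]) (auto simp: rne)
  have kp: "\<forall>t\<in>{a..b}. k t > 0" unfolding k_def using pos rne by (auto intro!: divide_pos_pos)
  have cc: "continuous_on {a..b} c" unfolding c_def
    by (intro continuous_intros continuous_on_subset[OF rc] continuous_on_subset[OF rho'_cont]) (auto simp: rne)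
  obtain C where C: "C \<ge> 0" "\<forall>t\<in>{a..b}. \<bar>c t\<bar> \<le> C"
  proof -
    have "continuous_on {a..b} (\<lambda>t. \<bar>c t\<bar>)" by (intro continuous_intros cc)
    then obtain tm where "tm \<in> {a..b}" "\<forall>t\<in>{a..b}. \<bar>c t\<bar> \<le> \<bar>c tm\<bar>"
      using continuous_attains_sup[OF compact_Icc] ab by (metis atLeastAtMost_iff empty_iff less_imp_le order_refl)
    then show ?thesis using that[of "\<bar>c tm\<bar>"] by simp
  qed
  have psol': "continuous_on (slab a b l0) (\<lambda>p. w (fst p) (snd p))"
     "bounded ((\<lambda>p. w (fst p) (snd p)) ` slab a b l0)"
     "\<forall>y\<in>{0<..<l0}. w a y = u0 y"
     "\<forall>t\<in>{a<..b}. w t 0 = 0 \<and> w t l0 = 0"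
     "\<forall>t\<in>{a<..b}. \<forall>y\<in>{0<..<l0}. \<exists>wt wy wyy.
        ((\<lambda>s. w s y) has_real_derivative wt) (at t within {a..b}) \<and>
        (\<forall>z\<in>{0<..<l0}. ((\<lambda>x. w t x) has_real_derivative wy z) (at z)) \<and>
        (wy has_real_derivative wyy) (at y) \<and>
        wt = d / (\<rho> t)\<^sup>2 * wyy + (\<alpha> - \<rho>' t / \<rho> t) * w t y - \<gamma> * (w t y)\<^sup>2"
    using psol unfolding piece_solution_def slab_def b_def by auto
  obtain Bw where Bw: "Bw \<ge> 0" "\<forall>p\<in>slab a b l0. \<bar>w (fst p) (snd p)\<bar> \<le> Bw"
  proof -
    obtain B0 where "\<forall>x\<in>(\<lambda>p. w (fst p) (snd p)) ` slab a b l0. norm x \<le> B0"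
      using psol'(2) unfolding bounded_iff by blast
    then have "\<forall>p\<in>slab a b l0. \<bar>w (fst p) (snd p)\<bar> \<le> max B0 0" by force
    then show ?thesis using that[of "max B0 0"] by simp
  qed
  define C' where "C' = C + \<gamma> * Bw"
  have C': "C' \<ge> 0" "C \<le> C'" unfolding C'_def using C Bw pos by auto
  have phipos: "\<And>y. y \<in> {0..l0} \<Longrightarrow> \<phi> y > 0"
  proof -
    fix y assume y: "y \<in> {0..l0}"
    have "\<bar>y - l0/2\<bar> \<le> l0/2" using y by (simp add: abs_le_iff field_simps)
    then have "\<bar>\<mu> * (y - l0/2)\<bar> \<le> \<mu> * (l0/2)"
      using mu by (simp add: abs_mult mult_left_mono)
    then have "-(pi/2) < \<mu> * (y - l0/2)" "\<mu> * (y - l0/2) < pi/2" using mu by (auto simp: abs_le_iff)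
    then show "\<phi> y > 0" unfolding \<phi>_def by (rule cos_gt_zero_pi)
  qed
  have f0c: "continuous_on UNIV f0" unfolding f0_def by (intro continuous_intros rc) (auto simp: rne)
  have th_c: "continuous_on {0..T} \<theta>" unfolding \<theta>_def
    by (rule indefinite_integral_continuous_1, rule integrable_continuous_interval, rule continuous_on_subset[OF f0c]) auto
  have th0: "\<theta> 0 = 0" unfolding \<theta>_def by simp
  have th_nn: "\<And>\<tau>. \<tau> \<ge> 0 \<Longrightarrow> \<theta> \<tau> \<ge> 0"
  proof -
    fix \<tau> :: real assume "\<tau> \<ge> 0"
    show "\<theta> \<tau> \<ge> 0" unfolding \<theta>_def
      by (rule Henstock_Kurzweil_Integration.integral_nonneg, rule integrable_continuous_interval,
          rule continuous_on_subset[OF f0c]) (auto simp: f0_def)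
  qed
  have dth: "\<And>t. t \<in> {a..b} \<Longrightarrow> ((\<lambda>t. \<theta> (t - a)) has_real_derivative 1 / (\<rho> t)\<^sup>2) (at t within {a..b})"
  proof -
    fix t assume t: "t \<in> {a..b}"
    have img: "(\<lambda>t. t - a) ` {a..b} = {0..T}" unfolding b_def by simp
    have "(\<theta> has_real_derivative f0 (t - a)) (at (t - a) within {0..T})"
      unfolding \<theta>_def by (rule integral_has_real_derivative, rule continuous_on_subset[OF f0c]) (use t b_def in auto)
    then have d1: "(\<theta> has_real_derivative f0 (t - a)) (at ((\<lambda>t. t - a) t) within ((\<lambda>t. t - a) ` {a..b}))"
      unfolding img by simp
    have d2: "((\<lambda>t. t - a) has_real_derivative 1) (at t within {a..b})" by (auto intro!: derivative_eq_intros)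
    have "(\<theta> \<circ> (\<lambda>t. t - a) has_real_derivative f0 (t - a) * 1) (at t within {a..b})"
      by (rule DERIV_image_chain[OF d1 d2])
    then show "((\<lambda>t. \<theta> (t - a)) has_real_derivative 1 / (\<rho> t)\<^sup>2) (at t within {a..b})"
      using rho_shift unfolding f0_def by (simp add: o_def)
  qed
  have dQ: "\<And>t. t \<in> {a..b} \<Longrightarrow> (Q has_real_derivative Q t * (\<alpha> - d * \<mu>\<^sup>2 / (\<rho> t)\<^sup>2 - \<rho>' t / \<rho> t)) (at t within {a..b})"
  proof -
    fix t assume t: "t \<in> {a..b}"
    have dr: "(\<rho> has_real_derivative \<rho>' t) (at t within {a..b})"
      using rho_deriv has_field_derivative_at_within by blast
    have A1: "((\<lambda>x. \<alpha> * (x - a)) has_real_derivative \<alpha> * 1) (at t within {a..b})"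
      by (auto intro!: derivative_eq_intros)
    have de: "((\<lambda>x. \<alpha> * (x - a) - d * \<mu>\<^sup>2 * \<theta> (x - a)) has_real_derivative \<alpha> * 1 - d * \<mu>\<^sup>2 * (1 / (\<rho> t)\<^sup>2)) (at t within {a..b})"
      by (rule DERIV_diff[OF A1 DERIV_cmult[OF dth[OF t]]])
    have dex: "((\<lambda>x. exp (\<alpha> * (x - a) - d * \<mu>\<^sup>2 * \<theta> (x - a))) has_real_derivative
        exp (\<alpha> * (t - a) - d * \<mu>\<^sup>2 * \<theta> (t - a)) * (\<alpha> * 1 - d * \<mu>\<^sup>2 * (1 / (\<rho> t)\<^sup>2))) (at t within {a..b})"
      by (rule DERIV_chain2[OF DERIV_exp de])
    have "(Q has_real_derivative
       ((exp (\<alpha> * (t - a) - d * \<mu>\<^sup>2 * \<theta> (t - a)) * (\<alpha> * 1 - d * \<mu>\<^sup>2 * (1 / (\<rho> t)\<^sup>2))) * \<rho> t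
         - exp (\<alpha> * (t - a) - d * \<mu>\<^sup>2 * \<theta> (t - a)) * \<rho>' t) / (\<rho> t * \<rho> t)) (at t within {a..b})"
      unfolding Q_def by (rule DERIV_divide[OF dex dr rne])
    moreover have "((exp (\<alpha> * (t - a) - d * \<mu>\<^sup>2 * \<theta> (t - a)) * (\<alpha> * 1 - d * \<mu>\<^sup>2 * (1 / (\<rho> t)\<^sup>2))) * \<rho> t
         - exp (\<alpha> * (t - a) - d * \<mu>\<^sup>2 * \<theta> (t - a)) * \<rho>' t) / (\<rho> t * \<rho> t)
        = Q t * (\<alpha> - d * \<mu>\<^sup>2 / (\<rho> t)\<^sup>2 - \<rho>' t / \<rho> t)"
      unfolding Q_def using rne[of t] by (simp add: field_simps power2_eq_square)
    ultimately show "(Q has_real_derivative Q t * (\<alpha> - d * \<mu>\<^sup>2 / (\<rho> t)\<^sup>2 - \<rho>' t / \<rho> t)) (at t within {a..b})"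
      by simp
  qed
  have Qpos: "\<And>t. Q t > 0" unfolding Q_def using rho_pos by simp
  have Qa: "Q a = 1" unfolding Q_def using th0 rho_a by simp
  have slabsub: "slab a b l0 \<subseteq> {a..b} \<times> {0..l0}" unfolding slab_def by auto
  have Psinn: "\<forall>p\<in>slab a b l0. \<Psi> (fst p) (snd p) \<ge> 0"
  proof
    fix p assume "p \<in> slab a b l0"
    then have "snd p \<in> {0..l0}" using slabsub by auto
    then show "\<Psi> (fst p) (snd p) \<ge> 0" unfolding \<Psi>_def using M Qpos phipos by (simp add: less_imp_le)
  qed
  have Psic: "continuous_on (slab a b l0) (\<lambda>p. \<Psi> (fst p) (snd p))"
  proof -
    have "continuous_on (slab a b l0) (\<lambda>p. \<theta> (fst p - a))"
      by (rule continuous_on_compose2[OF th_c, of _ "\<lambda>p. fst p - a"]) (use slabsub b_def in \<open>auto intro!: continuous_intros\<close>)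
    moreover have "continuous_on (slab a b l0) (\<lambda>p. \<rho> (fst p))"
      by (rule continuous_on_compose2[OF rc]) (auto intro!: continuous_intros)
    ultimately show ?thesis unfolding \<Psi>_def Q_def \<phi>_def
      by (intro continuous_intros) (auto simp: rne)
  qed
  have Psid: "\<And>t y. t \<in> {a..b} \<Longrightarrow>
     ((\<lambda>s. \<Psi> s y) has_real_derivative M * (Q t * (\<alpha> - d * \<mu>\<^sup>2 / (\<rho> t)\<^sup>2 - \<rho>' t / \<rho> t)) * \<phi> y) (at t within {a..b}) \<and>
     (\<forall>z. ((\<lambda>x. \<Psi> t x) has_real_derivative M * Q t * (- (\<mu> * sin (\<mu> * (z - l0/2))))) (at z)) \<and>
     ((\<lambda>z. M * Q t * (- (\<mu> * sin (\<mu> * (z - l0/2))))) has_real_derivative M * Q t * (- (\<mu>\<^sup>2 * \<phi> y))) (at y)"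
  proof (intro conjI allI)
    fix t y z assume t: "t \<in> {a..b}"
    show "((\<lambda>s. \<Psi> s y) has_real_derivative M * (Q t * (\<alpha> - d * \<mu>\<^sup>2 / (\<rho> t)\<^sup>2 - \<rho>' t / \<rho> t)) * \<phi> y) (at t within {a..b})"
      unfolding \<Psi>_def by (rule DERIV_cmult_right[OF DERIV_cmult[OF dQ[OF t]]])
    show "((\<lambda>x. \<Psi> t x) has_real_derivative M * Q t * (- (\<mu> * sin (\<mu> * (z - l0/2))))) (at z)"
      unfolding \<Psi>_def \<phi>_def by (auto intro!: derivative_eq_intros)
    show "((\<lambda>z. M * Q t * (- (\<mu> * sin (\<mu> * (z - l0/2))))) has_real_derivative M * Q t * (- (\<mu>\<^sup>2 * \<phi> y))) (at y)"
      unfolding \<phi>_def by (auto intro!: derivative_eq_intros simp: power2_eq_square)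
  qed
  have ident: "\<And>t y. M * (Q t * (\<alpha> - d * \<mu>\<^sup>2 / (\<rho> t)\<^sup>2 - \<rho>' t / \<rho> t)) * \<phi> y
      = k t * (M * Q t * (- (\<mu>\<^sup>2 * \<phi> y))) + c t * \<Psi> t y"
    unfolding k_def c_def \<Psi>_def by (simp add: algebra_simps)
  have slabin: "\<And>t y. t \<in> {a<..b} \<Longrightarrow> y \<in> {0<..<l0} \<Longrightarrow> (t, y) \<in> slab a b l0"
    unfolding slab_def by auto
  have up: "\<forall>p\<in>slab a b l0. (\<lambda>t y. w t y - \<Psi> t y) (fst p) (snd p) \<le> 0"
  proof (rule mp_weak[where B = Bw, OF ab kc kp C'(1)])
    show "continuous_on (slab a b l0) (\<lambda>p. w (fst p) (snd p) - \<Psi> (fst p) (snd p))"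
      by (intro continuous_intros psol'(1) Psic)
    show "\<forall>p\<in>slab a b l0. w (fst p) (snd p) - \<Psi> (fst p) (snd p) \<le> Bw"
      using Bw(2) Psinn by (smt (verit, best))
    show "\<forall>y\<in>{0<..<l0}. w a y - \<Psi> a y \<le> 0"
      using psol'(3) u0 Qa unfolding \<Psi>_def \<phi>_def by simp
    show "\<forall>t\<in>{a<..b}. w t 0 - \<Psi> t 0 \<le> 0 \<and> w t l0 - \<Psi> t l0 \<le> 0"
    proof
      fix t assume t: "t \<in> {a<..b}"
      have "(t, 0) \<in> slab a b l0" "(t, l0) \<in> slab a b l0" using t ab unfolding slab_def by auto
      then have "\<Psi> t 0 \<ge> 0" "\<Psi> t l0 \<ge> 0" using Psinn by force+
      then show "w t 0 - \<Psi> t 0 \<le> 0 \<and> w t l0 - \<Psi> t l0 \<le> 0" using psol'(4) t by simp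
    qed
    show "\<forall>t\<in>{a<..b}. \<forall>y\<in>{0<..<l0}. w t y - \<Psi> t y > 0 \<longrightarrow>
      derivs_at (\<lambda>t y. w t y - \<Psi> t y) a b l0 t y (\<lambda>zt zyy. zt \<le> k t * zyy + C' * (w t y - \<Psi> t y))"
    proof (intro ballI impI)
      fix t y assume t: "t \<in> {a<..b}" and y: "y \<in> {0<..<l0}" and zp: "w t y - \<Psi> t y > 0"
      obtain wt wy wyy where W: "((\<lambda>s. w s y) has_real_derivative wt) (at t within {a..b})"
        "\<forall>z\<in>{0<..<l0}. ((\<lambda>x. w t x) has_real_derivative wy z) (at z)"
        "(wy has_real_derivative wyy) (at y)"
        "wt = d / (\<rho> t)\<^sup>2 * wyy + (\<alpha> - \<rho>' t / \<rho> t) * w t y - \<gamma> * (w t y)\<^sup>2"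
        using psol'(5) t y by blast
      have tt: "t \<in> {a..b}" using t by auto
      note P = Psid[OF tt, of y]
      have ineq1: "c t * (w t y - \<Psi> t y) \<le> C' * (w t y - \<Psi> t y)"
      proof -
        have "c t \<le> C'" using C(2) C'(2) tt by (smt (verit))
        then show ?thesis using zp by (simp add: mult_right_mono)
      qed
      have ineq2: "\<gamma> * (w t y)\<^sup>2 \<ge> 0" using pos by simp
      have ineq: "wt - M * (Q t * (\<alpha> - d * \<mu>\<^sup>2 / (\<rho> t)\<^sup>2 - \<rho>' t / \<rho> t)) * \<phi> y
          \<le> k t * (wyy - M * Q t * (- (\<mu>\<^sup>2 * \<phi> y))) + C' * (w t y - \<Psi> t y)"
        unfolding ident W(4) using ineq1 ineq2 unfolding k_def c_def by (simp add: algebra_simps)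
      show "derivs_at (\<lambda>t y. w t y - \<Psi> t y) a b l0 t y (\<lambda>zt zyy. zt \<le> k t * zyy + C' * (w t y - \<Psi> t y))"
        unfolding derivs_at_def
        apply (rule exI[of _ "wt - M * (Q t * (\<alpha> - d * \<mu>\<^sup>2 / (\<rho> t)\<^sup>2 - \<rho>' t / \<rho> t)) * \<phi> y"])
        apply (rule exI[of _ "\<lambda>z. wy z - M * Q t * (- (\<mu> * sin (\<mu> * (z - l0/2))))"])
        apply (rule exI[of _ "wyy - M * Q t * (- (\<mu>\<^sup>2 * \<phi> y))"])
        apply (intro conjI ballI)
           apply (rule DERIV_diff[OF W(1) P[THEN conjunct1]])
          apply (rule DERIV_diff[OF W(2)[rule_format] P[THEN conjunct2, THEN conjunct1, rule_format]], assumption)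
         apply (rule DERIV_diff[OF W(3) P[THEN conjunct2, THEN conjunct2]])
        by (rule ineq)
    qed
  qed
  have low: "\<forall>p\<in>slab a b l0. (\<lambda>t y. - w t y) (fst p) (snd p) \<le> 0"
  proof (rule mp_weak[where B = Bw, OF ab kc kp C'(1)])
    show "continuous_on (slab a b l0) (\<lambda>p. - w (fst p) (snd p))"
      by (intro continuous_intros psol'(1))
    show "\<forall>p\<in>slab a b l0. - w (fst p) (snd p) \<le> Bw"
      using Bw(2) by (smt (verit, best))
    show "\<forall>y\<in>{0<..<l0}. - w a y \<le> 0"
      using psol'(3) u0 by simp
    show "\<forall>t\<in>{a<..b}. - w t 0 \<le> 0 \<and> - w t l0 \<le> 0"
      using psol'(4) by simp
    show "\<forall>t\<in>{a<..b}. \<forall>y\<in>{0<..<l0}. - w t y > 0 \<longrightarrow>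
      derivs_at (\<lambda>t y. - w t y) a b l0 t y (\<lambda>zt zyy. zt \<le> k t * zyy + C' * (- w t y))"
    proof (intro ballI impI)
      fix t y assume t: "t \<in> {a<..b}" and y: "y \<in> {0<..<l0}" and zp: "- w t y > 0"
      obtain wt wy wyy where W: "((\<lambda>s. w s y) has_real_derivative wt) (at t within {a..b})"
        "\<forall>z\<in>{0<..<l0}. ((\<lambda>x. w t x) has_real_derivative wy z) (at z)"
        "(wy has_real_derivative wyy) (at y)"
        "wt = d / (\<rho> t)\<^sup>2 * wyy + (\<alpha> - \<rho>' t / \<rho> t) * w t y - \<gamma> * (w t y)\<^sup>2"
        using psol'(5) t y by blast
      have tt: "t \<in> {a..b}" using t by auto
      have ineq1: "c t * (- w t y) \<le> C * (- w t y)"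
      proof -
        have "c t \<le> C" using C(2) tt by (smt (verit))
        then show ?thesis using zp by (simp add: mult_right_mono)
      qed
      have ineq2: "\<gamma> * (w t y)\<^sup>2 \<le> \<gamma> * Bw * (- w t y)"
      proof -
        have "- w t y \<le> Bw" using Bw(2) slabin[OF t y] by force
        then have "(- w t y) * (- w t y) \<le> Bw * (- w t y)" using zp by (intro mult_right_mono) auto
        then have "\<gamma> * ((- w t y) * (- w t y)) \<le> \<gamma> * (Bw * (- w t y))" using pos by (intro mult_left_mono) auto
        then show ?thesis by (simp add: power2_eq_square mult.assoc)
      qed
      have ineq: "- wt \<le> k t * (- wyy) + C' * (- w t y)"
        unfolding W(4) C'_def using ineq1 ineq2 unfolding k_def c_def by (simp add: algebra_simps)
      show "derivs_at (\<lambda>t y. - w t y) a b l0 t y (\<lambda>zt zyy. zt \<le> k t * zyy + C' * (- w t y))"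
        unfolding derivs_at_def
        apply (rule exI[of _ "- wt"])
        apply (rule exI[of _ "\<lambda>z. - wy z"])
        apply (rule exI[of _ "- wyy"])
        apply (intro conjI ballI)
           apply (rule DERIV_minus[OF W(1)])
          apply (rule DERIV_minus[OF W(2)[rule_format]], assumption)
         apply (rule DERIV_minus[OF W(3)])
        by (rule ineq)
    qed
  qed
  show ?thesis
  proof
    fix p assume "p \<in> slab a (a + T) l0"
    then have p: "p \<in> slab a b l0" unfolding b_def .
    show "0 \<le> w (fst p) (snd p) \<and>
     w (fst p) (snd p) \<le> M * (exp (\<alpha> * (fst p - a) - d * \<mu>\<^sup>2 * integral {0..fst p - a} (\<lambda>t. 1 / (\<rho> t)\<^sup>2)) / \<rho> (fst p))
        * cos (\<mu> * (snd p - l0/2))"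
      using up[rule_format, OF p] low[rule_format, OF p] unfolding \<Psi>_def Q_def \<theta>_def f0_def \<phi>_def by simp
  qed
qed



theorem theorem3p2:
  fixes d \<alpha> \<gamma> T l0 :: real
    and \<rho> \<rho>' g g' v0 :: "real \<Rightarrow> real"
    and v :: "real \<Rightarrow> real \<Rightarrow> real"
  assumes pos: "d > 0" "\<alpha> > 0" "\<gamma> > 0" "T > 0" "l0 > 0"
    and rho_pos: "\<forall>t. \<rho> t > 0"
    and rho_deriv: "\<forall>t. (\<rho> has_real_derivative \<rho>' t) (at t)"
    and rho'_cont: "continuous_on UNIV \<rho>'"
    and rho_per: "\<forall>t. \<rho> (t + T) = \<rho> t"
    and rho0: "\<rho> 0 = 1"
    and g_deriv: "\<forall>u\<ge>0. (g has_real_derivative g' u) (at u within {0..})"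
    and g'_cont: "continuous_on {0..} g'"
    and g0: "g 0 = 0"
    and g'0: "g' 0 > 0"
    and g_pos: "\<forall>u>0. g u > 0"
    and g_ratio_mono: "\<forall>u1 u2. 0 < u1 \<and> u1 \<le> u2 \<longrightarrow> g u2 / u2 \<le> g u1 / u1"
    and g_ratio_bd: "\<forall>u>0. 0 < g u / u \<and> g u / u < 1"
    and B1: "mono_on {0..} g"
    and B2: "\<exists>D \<sigma> \<nu>. D > 0 \<and> \<sigma> > 0 \<and> \<nu> > 1 \<and>
               (\<forall>u. 0 \<le> u \<and> u \<le> \<sigma> \<longrightarrow> g u \<ge> g' 0 * u - D * u powr \<nu>)"
    and R0: "\<alpha> / (d * (pi / l0)\<^sup>2 / T * integral {0..T} (\<lambda>t. 1 / (\<rho> t)\<^sup>2)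
                  - 1 / T * ln (g' 0)) < 1"
    and v0_cont: "continuous_on {0..l0} v0"
    and v0_nonneg: "\<forall>y\<in>{0..l0}. v0 y \<ge> 0"
    and v0_nz: "\<exists>y\<in>{0<..<l0}. v0 y \<noteq> 0"
    and sol: "impulsive_solution d \<alpha> \<gamma> \<rho> \<rho>' g T l0 v0 v"
  shows "\<forall>\<epsilon>>0. \<exists>t0. \<forall>t\<ge>t0. \<forall>y\<in>{0..l0}. \<bar>v t y\<bar> < \<epsilon>"
proof -
  define \<kappa> where "\<kappa> = g' 0"
  have lim: "((\<lambda>y. g y / y) \<longlongrightarrow> \<kappa>) (at_right 0)"
  proof -
    have "(g has_real_derivative \<kappa>) (at 0 within {0..})" using g_deriv unfolding \<kappa>_def by simp
    then have "((\<lambda>y. (g y - g 0) / (y - 0)) \<longlongrightarrow> \<kappa>) (at 0 within {0..})"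
      unfolding has_field_derivative_iff .
    then show ?thesis using g0 by (simp add: at_within_Ici_at_right)
  qed
  have gk: "\<And>u. u \<ge> 0 \<Longrightarrow> g u \<le> \<kappa> * u"
  proof -
    fix u :: real assume u: "u \<ge> 0"
    show "g u \<le> \<kappa> * u"
    proof (cases "u = 0")
      case True then show ?thesis using g0 by simp
    next
      case False
      then have up: "u > 0" using u by simp
      have "eventually (\<lambda>y. y \<in> {0<..<u}) (at_right 0)" using eventually_at_right_real[OF up] .
      then have "eventually (\<lambda>y. g u / u \<le> g y / y) (at_right 0)"
        by (rule eventually_mono) (use g_ratio_mono in auto)
      then have "g u / u \<le> \<kappa>" by (rule tendsto_lowerbound[OF lim]) simp
      then show ?thesis using up by (simp add: field_simps)
    qed
  qed
  have k1: "\<kappa> \<le> 1"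
  proof -
    have "eventually (\<lambda>y. y \<in> {0<..<1}) (at_right (0::real))" by (rule eventually_at_right_real) simp
    then have "eventually (\<lambda>y. g y / y \<le> 1) (at_right 0)"
      by (rule eventually_mono) (use g_ratio_bd in \<open>auto simp: less_imp_le\<close>)
    then show ?thesis by (rule tendsto_upperbound[OF lim]) simp
  qed
  have kpos: "\<kappa> > 0" unfolding \<kappa>_def using g'0 .
  have gnn: "\<And>u. u \<ge> 0 \<Longrightarrow> g u \<ge> 0" using g0 g_pos by (metis less_eq_real_def order_refl)
  have rc: "continuous_on UNIV \<rho>"
    using rho_deriv DERIV_isCont continuous_at_imp_continuous_on by blast
  have rne: "\<And>t. \<rho> t \<noteq> 0" using rho_pos by (metis less_irrefl)
  have rper: "\<And>n x. \<rho> (x + real n * T) = \<rho> x"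
  proof -
    fix n :: nat and x
    show "\<rho> (x + real n * T) = \<rho> x"
    proof (induction n)
      case 0 then show ?case by simp
    next
      case (Suc n)
      have "\<rho> (x + real (Suc n) * T) = \<rho> ((x + real n * T) + T)" by (simp add: algebra_simps)
      also have "\<dots> = \<rho> (x + real n * T)" using rho_per by simp
      finally show ?case using Suc by simp
    qed
  qed
  have rshift: "\<And>n t. \<rho> (t - real n * T) = \<rho> t" using rper by (metis diff_add_cancel)
  have rnT: "\<And>n. \<rho> (real n * T) = 1" using rper[of 0] rho0 by simp
  define f0 where "f0 = (\<lambda>t. 1 / (\<rho> t)\<^sup>2)"
  have f0c: "continuous_on UNIV f0" unfolding f0_def by (intro continuous_intros rc) (auto simp: rne)
  define I0 where "I0 = integral {0..T} f0"
  have I0pos: "I0 > 0"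
  proof -
    have cs: "continuous_on {0..T} f0" by (rule continuous_on_subset[OF f0c]) auto
    obtain x where x: "x \<in> {0..T}" "\<forall>y\<in>{0..T}. f0 x \<le> f0 y"
      using continuous_attains_inf[OF compact_Icc _ cs] pos by auto
    have fx: "f0 x > 0" unfolding f0_def using rne by simp
    have "integral {0..T} (\<lambda>_. f0 x) \<le> integral {0..T} f0"
      by (rule integral_le) (use cs x in \<open>auto intro: integrable_continuous_interval\<close>)
    moreover have "integral {0..T} (\<lambda>_. f0 x) = T * f0 x" using pos by simp
    moreover have "T * f0 x > 0" using fx pos by simp
    ultimately show ?thesis unfolding I0_def by linarith
  qed
  have lnk: "ln \<kappa> \<le> 0" using k1 kpos by simp
  define Den where "Den = d * (pi / l0)\<^sup>2 / T * I0 - 1 / T * ln \<kappa>"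
  have Denpos: "Den > 0"
  proof -
    have "d * (pi / l0)\<^sup>2 / T * I0 > 0" using pos I0pos by simp
    moreover have "1 / T * ln \<kappa> \<le> 0" using lnk pos by (simp add: divide_nonpos_pos mult_nonneg_nonpos2 mult_nonpos_nonneg)
    ultimately show ?thesis unfolding Den_def by linarith
  qed
  have "\<alpha> / Den < 1" using R0 unfolding Den_def I0_def f0_def \<kappa>_def .
  then have aDen: "\<alpha> < Den" using Denpos by (simp add: divide_less_eq)
  have key0: "\<alpha> * T + ln \<kappa> < d * (pi / l0)\<^sup>2 * I0"
  proof -
    have "\<alpha> * T < Den * T" using aDen pos by simp
    also have "Den * T = d * (pi / l0)\<^sup>2 * I0 - ln \<kappa>" unfolding Den_def using pos by (simp add: field_simps)
    finally show ?thesis by simp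
  qed
  define m where "m = (\<alpha> * T + ln \<kappa>) / (d * I0)"
  have dI: "d * I0 > 0" using pos I0pos by simp
  have m_lt: "m < (pi / l0)\<^sup>2" unfolding m_def using key0 dI by (simp add: divide_less_eq mult.commute mult.left_commute)
  define \<mu>2 where "\<mu>2 = ((pi / l0)\<^sup>2 + max m 0) / 2"
  have mu2: "\<mu>2 > 0" "\<mu>2 < (pi / l0)\<^sup>2" "m < \<mu>2" unfolding \<mu>2_def using m_lt pos by (auto simp: max_def)
  define \<mu> where "\<mu> = sqrt \<mu>2"
  have mu: "\<mu> > 0" "\<mu>\<^sup>2 = \<mu>2" unfolding \<mu>_def using mu2 by auto
  have "\<mu> < pi / l0"
  proof -
    have "\<mu> < sqrt ((pi / l0)\<^sup>2)" unfolding \<mu>_def using mu2(2) by (rule real_sqrt_less_mono)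
    moreover have "sqrt ((pi / l0)\<^sup>2) = pi / l0" using pos by simp
    ultimately show ?thesis by simp
  qed
  then have mul0: "\<mu> * l0 < pi" using pos by (simp add: field_simps)
  have key1: "\<alpha> * T + ln \<kappa> - d * \<mu>\<^sup>2 * I0 < 0"
  proof -
    have "d * I0 * m < d * I0 * \<mu>2" using dI mu2(3) by (rule mult_strict_left_mono[rotated])
    moreover have "d * I0 * m = \<alpha> * T + ln \<kappa>" unfolding m_def using pos(1) I0pos by (simp add: field_simps)
    ultimately show ?thesis using mu by (simp add: algebra_simps)
  qed
  define q where "q = \<kappa> * exp (\<alpha> * T - d * \<mu>\<^sup>2 * I0)"
  have q: "q > 0" "q < 1"
  proof -
    show "q > 0" unfolding q_def using kpos by simp
    have "q = exp (\<alpha> * T + ln \<kappa> - d * \<mu>\<^sup>2 * I0)" unfolding q_def using kpos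
      by (simp add: exp_add exp_diff algebra_simps)
    then show "q < 1" using key1 by simp
  qed
  define \<phi> where "\<phi> = (\<lambda>y. cos (\<mu> * (y - l0/2)))"
  define \<phi>0 where "\<phi>0 = cos (\<mu> * (l0 / 2))"
  have phi0: "\<phi>0 > 0"
  proof -
    have "\<mu> * (l0/2) < pi/2" using mul0 by simp
    moreover have "0 < \<mu> * (l0/2)" using mu(1) pos(5) by simp
    moreover have "-(pi/2) < 0" using pi_gt_zero by simp
    ultimately show ?thesis unfolding \<phi>0_def by (intro cos_gt_zero_pi; linarith)
  qed
  have phige: "\<And>y. y \<in> {0..l0} \<Longrightarrow> \<phi> y \<ge> \<phi>0"
  proof -
    fix y assume y: "y \<in> {0..l0}"
    have "\<bar>y - l0/2\<bar> \<le> l0/2" using y by (simp add: abs_le_iff field_simps)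
    then have ab: "\<bar>\<mu> * (y - l0/2)\<bar> \<le> \<mu> * (l0/2)" using mu by (simp add: abs_mult mult_left_mono)
    have "cos (\<mu> * (l0/2)) \<le> cos \<bar>\<mu> * (y - l0/2)\<bar>"
      by (rule cos_monotone_0_pi_le) (use ab mul0 in auto)
    then show "\<phi> y \<ge> \<phi>0" unfolding \<phi>_def \<phi>0_def by simp
  qed
  have phile: "\<And>y. \<phi> y \<le> 1" unfolding \<phi>_def by simp
  obtain Bv where Bv: "Bv \<ge> 0" "\<forall>y\<in>{0..l0}. v0 y \<le> Bv"
  proof -
    obtain ym where "ym \<in> {0..l0}" "\<forall>y\<in>{0..l0}. v0 y \<le> v0 ym"
      using continuous_attains_sup[OF compact_Icc _ v0_cont] pos by (metis atLeastAtMost_iff empty_iff less_imp_le order_refl)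
    then show ?thesis using that[of "v0 ym"] v0_nonneg by auto
  qed
  define m0 where "m0 = Bv / \<phi>0"
  have m0: "m0 \<ge> 0" unfolding m0_def using Bv phi0 by simp
  obtain rmin where rmin: "rmin > 0" "\<forall>t\<in>{0..T}. rmin \<le> \<rho> t"
  proof -
    have "\<exists>x\<in>{0..T}. \<forall>y\<in>{0..T}. \<rho> x \<le> \<rho> y"
      by (rule continuous_attains_inf[OF compact_Icc]) (use pos continuous_on_subset[OF rc] in auto)
    then obtain x where "x \<in> {0..T}" "\<forall>y\<in>{0..T}. \<rho> x \<le> \<rho> y" by blast
    then show ?thesis using that[of "\<rho> x"] rho_pos by auto
  qed
  define K where "K = \<kappa> * m0 * exp (\<alpha> * T) / rmin"
  have K: "K \<ge> 0" unfolding K_def using kpos m0 rmin by simp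
  have sol': "\<forall>y\<in>{0..l0}. v 0 y = v0 y"
     "\<forall>n::nat. \<exists>w. piece_solution d \<alpha> \<gamma> \<rho> \<rho>' (real n * T) (real (Suc n) * T) l0
                        (\<lambda>y. g (v (real n * T) y)) w \<and>
                   (\<forall>t\<in>{real n * T<..real (Suc n) * T}. \<forall>y\<in>{0..l0}. v t y = w t y)"
    using sol unfolding impulsive_solution_def by auto
  define P where "P = (\<lambda>n::nat. \<forall>y\<in>{0..l0}. 0 \<le> v (real n * T) y \<and> v (real n * T) y \<le> m0 * q ^ n * \<phi> y)"
  have step: "\<And>n. P n \<Longrightarrow> P (Suc n) \<and>
      (\<forall>t\<in>{real n * T<..real (Suc n) * T}. \<forall>y\<in>{0..l0}. 0 \<le> v t y \<and> v t y \<le> K * q ^ n)"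
  proof -
    fix n assume Pn: "P n"
    define a where "a = real n * T"
    have aT: "real (Suc n) * T = a + T" unfolding a_def by (simp add: algebra_simps)
    obtain w where w: "piece_solution d \<alpha> \<gamma> \<rho> \<rho>' a (a + T) l0 (\<lambda>y. g (v a y)) w"
       "\<forall>t\<in>{a<..a + T}. \<forall>y\<in>{0..l0}. v t y = w t y"
      using sol'(2)[rule_format, of n] unfolding aT a_def[symmetric] by blast
    define M where "M = \<kappa> * m0 * q ^ n"
    have M: "M \<ge> 0" unfolding M_def using kpos m0 q by simp
    have u0: "\<forall>y\<in>{0<..<l0}. 0 \<le> g (v a y) \<and> g (v a y) \<le> M * cos (\<mu> * (y - l0/2))"
    proof
      fix y :: real assume "y \<in> {0<..<l0}"
      then have y: "y \<in> {0..l0}" by auto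
      have v: "0 \<le> v a y" "v a y \<le> m0 * q ^ n * \<phi> y" using Pn y unfolding P_def a_def by auto
      have "g (v a y) \<le> \<kappa> * v a y" using gk v by simp
      also have "\<dots> \<le> \<kappa> * (m0 * q ^ n * \<phi> y)" using v kpos by simp
      finally show "0 \<le> g (v a y) \<and> g (v a y) \<le> M * cos (\<mu> * (y - l0/2))"
        using gnn v unfolding M_def \<phi>_def by (simp add: algebra_simps)
    qed
    have S: "\<forall>p\<in>slab a (a+T) l0. 0 \<le> w (fst p) (snd p) \<and>
       w (fst p) (snd p) \<le> M * (exp (\<alpha> * (fst p - a) - d * \<mu>\<^sup>2 * integral {0..fst p - a} (\<lambda>t. 1 / (\<rho> t)\<^sup>2)) / \<rho> (fst p))
          * cos (\<mu> * (snd p - l0/2))"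
      by (rule slab_step[OF pos(1,3,4,5) rho_pos rho_deriv rho'_cont _ _ mu(1) mul0 M w(1) u0])
         (use rshift rnT a_def in auto)
    have P1: "P (Suc n)"
      unfolding P_def
    proof
      fix y assume y: "y \<in> {0..l0}"
      have p: "(a + T, y) \<in> slab a (a+T) l0" using y pos unfolding slab_def by auto
      have vw: "v (a + T) y = w (a + T) y" using w(2) y pos by auto
      have r1: "\<rho> (a + T) = 1" using rnT[of "Suc n"] aT by simp
      have eq: "M * (exp (\<alpha> * T - d * \<mu>\<^sup>2 * I0) / 1) = m0 * q ^ Suc n"
        unfolding M_def q_def by (simp add: algebra_simps)
      have "0 \<le> w (a+T) y \<and> w (a+T) y \<le> M * (exp (\<alpha> * T - d * \<mu>\<^sup>2 * I0) / 1) * \<phi> y"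
        using S[rule_format, OF p] r1 unfolding I0_def f0_def \<phi>_def by simp
      then have "0 \<le> w (a+T) y \<and> w (a+T) y \<le> m0 * q ^ Suc n * \<phi> y" unfolding eq .
      then show "0 \<le> v (real (Suc n) * T) y \<and> v (real (Suc n) * T) y \<le> m0 * q ^ Suc n * \<phi> y"
        unfolding aT using vw by simp
    qed
    have B: "\<forall>t\<in>{real n * T<..real (Suc n) * T}. \<forall>y\<in>{0..l0}. 0 \<le> v t y \<and> v t y \<le> K * q ^ n"
    proof (intro ballI)
      fix t y assume t: "t \<in> {real n * T<..real (Suc n) * T}" and y: "y \<in> {0..l0}"
      have t': "t \<in> {a<..a+T}" using t aT a_def by simp
      have p: "(t, y) \<in> slab a (a+T) l0" using t' y unfolding slab_def by auto
      have vw: "v t y = w t y" using w(2) t' y by auto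
      have th: "integral {0..t - a} (\<lambda>t. 1 / (\<rho> t)\<^sup>2) \<ge> 0"
        by (rule Henstock_Kurzweil_Integration.integral_nonneg, rule integrable_continuous_interval,
          rule continuous_on_subset[OF f0c[unfolded f0_def]]) auto
      have e: "exp (\<alpha> * (t - a) - d * \<mu>\<^sup>2 * integral {0..t - a} (\<lambda>t. 1 / (\<rho> t)\<^sup>2)) \<le> exp (\<alpha> * T)"
      proof -
        have "d * \<mu>\<^sup>2 * integral {0..t - a} (\<lambda>t. 1 / (\<rho> t)\<^sup>2) \<ge> 0" using th pos by simp
        moreover have "\<alpha> * (t - a) \<le> \<alpha> * T" using t' pos by (simp add: mult_left_mono)
        ultimately show ?thesis by simp
      qed
      have r: "\<rho> t \<ge> rmin"
      proof -
        have "\<rho> t = \<rho> (t - a)" using rshift a_def by simp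
        moreover have "t - a \<in> {0..T}" using t' by auto
        ultimately show ?thesis using rmin by auto
      qed
      have "exp (\<alpha> * (t - a) - d * \<mu>\<^sup>2 * integral {0..t - a} (\<lambda>t. 1 / (\<rho> t)\<^sup>2)) / \<rho> t \<le> exp (\<alpha> * T) / rmin"
        using e r rmin by (intro frac_le) auto
      moreover have "cos (\<mu> * (y - l0/2)) \<le> 1" by simp
      moreover have "cos (\<mu> * (y - l0/2)) \<ge> 0" using phige[OF y] phi0 unfolding \<phi>_def by simp
      ultimately have "M * (exp (\<alpha> * (t - a) - d * \<mu>\<^sup>2 * integral {0..t - a} (\<lambda>t. 1 / (\<rho> t)\<^sup>2)) / \<rho> t) * cos (\<mu> * (y - l0/2))
          \<le> M * (exp (\<alpha> * T) / rmin) * 1"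
        using M rmin rho_pos by (intro mult_mono) (auto intro: mult_left_mono less_imp_le)
      also have "\<dots> = K * q ^ n" unfolding M_def K_def by simp
      finally show "0 \<le> v t y \<and> v t y \<le> K * q ^ n" using S[rule_format, OF p] vw by simp
    qed
    show "P (Suc n) \<and> (\<forall>t\<in>{real n * T<..real (Suc n) * T}. \<forall>y\<in>{0..l0}. 0 \<le> v t y \<and> v t y \<le> K * q ^ n)"
      using P1 B by blast
  qed
  have Pall: "\<And>n. P n"
  proof -
    fix n show "P n"
    proof (induction n)
      case 0
      show ?case unfolding P_def
      proof
        fix y assume y: "y \<in> {0..l0}"
        have "v0 y \<le> m0 * \<phi>0" unfolding m0_def using Bv y phi0 by simp
        also have "\<dots> \<le> m0 * \<phi> y" using phige[OF y] m0 by (simp add: mult_left_mono)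
        finally show "0 \<le> v (real 0 * T) y \<and> v (real 0 * T) y \<le> m0 * q ^ 0 * \<phi> y"
          using sol'(1) y v0_nonneg by simp
      qed
    next
      case (Suc n) then show ?case using step by blast
    qed
  qed
  show ?thesis
  proof (intro allI impI)
    fix \<epsilon> :: real assume eps: "\<epsilon> > 0"
    obtain N where N: "q ^ N < \<epsilon> / (K + 1)" using real_arch_pow_inv[of "\<epsilon> / (K + 1)" q] eps K q by auto
    show "\<exists>t0. \<forall>t\<ge>t0. \<forall>y\<in>{0..l0}. \<bar>v t y\<bar> < \<epsilon>"
    proof (intro exI allI impI ballI)
      fix t y assume t: "real (Suc N) * T \<le> t" and y: "y \<in> {0..l0}"
      define j where "j = nat \<lceil>t / T\<rceil>"
      have tpos: "t > 0" using t pos by (smt (verit) mult_pos_pos of_nat_0_less_iff zero_less_Suc)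
      have "t / T > 0" using tpos pos by simp
      then have cpos: "\<lceil>t / T\<rceil> \<ge> 0" by (simp add: less_imp_le)
      have rj: "real j = of_int \<lceil>t / T\<rceil>" unfolding j_def using cpos by simp
      have jge: "real j \<ge> t / T" unfolding rj using ceiling_correct[of "t / T"] by linarith
      have jlt: "real j < t / T + 1" unfolding rj using ceiling_correct[of "t / T"] by linarith
      have j1: "real j * T \<ge> t" using jge pos by (simp add: field_simps)
      have j2: "(real j - 1) * T < t" using jlt pos by (simp add: field_simps)
      have "t / T \<ge> real (Suc N)" using t pos by (simp add: field_simps)
      then have jN: "j \<ge> Suc N" using jge by linarith
      define n where "n = j - 1"
      have nj: "j = Suc n" unfolding n_def using jN by simp
      have tn: "t \<in> {real n * T<..real (Suc n) * T}" using j1 j2 nj by auto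
      have nN: "N \<le> n" using jN nj by simp
      have "0 \<le> v t y \<and> v t y \<le> K * q ^ n" using step[OF Pall[of n]] tn y by blast
      moreover have "K * q ^ n \<le> K * q ^ N" using K q nN by (intro mult_left_mono power_decreasing) auto
      moreover have "K * q ^ N \<le> (K + 1) * q ^ N" using q by simp
      moreover have "(K + 1) * q ^ N < \<epsilon>" using N K by (simp add: field_simps)
      ultimately show "\<bar>v t y\<bar> < \<epsilon>" by simp
    qed
  qed
qed


end
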